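(* Let $\Omega\subset\mathbb R^n$ be a bounded domain and $\alpha<0$. If $u\in C^2(\Omega)\cap C^1(\overline\Omega)$ is a positive solution of $$\mathrm{div}\left(\frac{Du}{\sqrt{1-|Du|^2}}\right)=\frac{\alpha}{u\sqrt{1-|Du|^2}}\ \text{ in }\Omega,\qquad u=\varphi\ \text{ on }\partial\Omega,\qquad |Du|<1\ \text{ in }\overline\Omega$$ (for some positive boundary function $\varphi$), then $$\max_{\overline\Omega}|Du|=\max_{\partial\Omega}|Du|.$$ *)

theory Defs
  imports "HOL-Analysis.Analysis"
begin

definition divergence :: "('a::euclidean_space \<Rightarrow> 'a) \<Rightarrow> 'a \<Rightarrow> real" where
  "divergence F x = (\<Sum>b\<in>Basis. frechet_derivative F (at x) b \<bullet> b)"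

end

theory Submission
  imports Defs
begin

lemma line_deriv:
  assumes "(f has_derivative (\<lambda>h. g \<bullet> h)) (at (y + t *\<^sub>R e))"
  shows "((\<lambda>s. f (y + s *\<^sub>R e)) has_real_derivative (g \<bullet> e)) (at t)"
proof -
  have l: "((\<lambda>s. y + s *\<^sub>R e) has_derivative (\<lambda>s. s *\<^sub>R e)) (at t)"
    by (auto intro!: derivative_eq_intros)
  have "((\<lambda>s. f (y + s *\<^sub>R e)) has_derivative (\<lambda>s. g \<bullet> (s *\<^sub>R e))) (at t)"
    using has_derivative_compose[OF l assms] by simp
  moreover have "(\<lambda>s. g \<bullet> (s *\<^sub>R e)) = (*) (g \<bullet> e)" by (auto simp: mult.commute)
  ultimately show ?thesis by (simp add: has_field_derivative_def)
qed

lemma line_deriv2: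
  assumes "(G has_derivative H) (at (y + t *\<^sub>R k))"
  shows "((\<lambda>s. G (y + s *\<^sub>R k) \<bullet> c) has_real_derivative (H k \<bullet> c)) (at t)"
proof -
  have lin: "linear H" using assms has_derivative_linear by blast
  have l: "((\<lambda>s. y + s *\<^sub>R k) has_derivative (\<lambda>s. s *\<^sub>R k)) (at t)"
    by (auto intro!: derivative_eq_intros)
  have "((\<lambda>s. G (y + s *\<^sub>R k)) has_derivative (\<lambda>s. H (s *\<^sub>R k))) (at t)"
    using has_derivative_compose[OF l assms] by simp
  then have "((\<lambda>s. G (y + s *\<^sub>R k) \<bullet> c) has_derivative (\<lambda>s. H (s *\<^sub>R k) \<bullet> c)) (at t)"
    by (auto intro!: derivative_eq_intros)
  moreover have "(\<lambda>s. H (s *\<^sub>R k) \<bullet> c) = (*) (H k \<bullet> c)"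
    using lin by (auto simp: linear_scale mult.commute)
  ultimately show ?thesis by (simp add: has_field_derivative_def)
qed

lemma local_max_2nd:
  fixes W :: "'a::euclidean_space \<Rightarrow> real"
  assumes r: "r > 0" and mx: "\<forall>y\<in>ball y0 r. W y \<le> W y0"
   and grad: "\<forall>y\<in>ball y0 r. (W has_derivative (\<lambda>h. G y \<bullet> h)) (at y)"
   and hess: "(G has_derivative H) (at y0)"
  shows "G y0 = 0 \<and> H k \<bullet> k \<le> 0"
proof -
  have G0: "G y0 = 0"
  proof -
    let ?k = "G y0"
    have d: "((\<lambda>s. W (y0 + s *\<^sub>R ?k)) has_real_derivative (G y0 \<bullet> ?k)) (at 0)"
      using line_deriv[of W "G y0" y0 0 ?k] grad r by simp
    show ?thesis
    proof (cases "?k = 0")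
      case False
      have "G y0 \<bullet> ?k = 0"
      proof (rule DERIV_local_max[OF d, of "r / norm ?k"])
        show "0 < r / norm ?k" using r False by simp
        show "\<forall>y. \<bar>0 - y\<bar> < r / norm ?k \<longrightarrow> W (y0 + y *\<^sub>R ?k) \<le> W (y0 + 0 *\<^sub>R ?k)"
        proof (intro allI impI)
          fix y assume "\<bar>0 - y\<bar> < r / norm ?k"
          then have "norm (y *\<^sub>R ?k) < r" using False by (simp add: field_simps)
          then have "y0 + y *\<^sub>R ?k \<in> ball y0 r" by (simp add: dist_norm)
          then show "W (y0 + y *\<^sub>R ?k) \<le> W (y0 + 0 *\<^sub>R ?k)" using mx by simp
        qed
      qed
      then show ?thesis by simp
    qed simp
  qed
  have "H k \<bullet> k \<le> 0"
  proof (rule ccontr)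
    assume c: "\<not> H k \<bullet> k \<le> 0"
    then have kn: "k \<noteq> 0" using has_derivative_linear[OF hess] linear_0 by force
    have d: "((\<lambda>s. G (y0 + s *\<^sub>R k) \<bullet> k) has_real_derivative (H k \<bullet> k)) (at 0)"
      using line_deriv2[of G H y0 0 k k] hess by simp
    obtain d where d0: "d > 0" and dd: "\<forall>h>0. h < d \<longrightarrow> G (y0 + 0 *\<^sub>R k) \<bullet> k < G (y0 + (0 + h) *\<^sub>R k) \<bullet> k"
      using DERIV_pos_inc_right[OF d] c by force
    define t where "t = min d (r / norm k) / 2"
    have t0: "t > 0" using d0 r kn by (simp add: t_def)
    have inb: "y0 + s *\<^sub>R k \<in> ball y0 r" if "0 \<le> s" "s \<le> t" for s
    proof -
      have "r / norm k > 0" using r kn by simp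
      then have "t < r / norm k" unfolding t_def using min.cobounded2[of d "r / norm k"] by (smt (verit) field_sum_of_halves)
      then have "s < r / norm k" using that by linarith
      then have "norm (s *\<^sub>R k) < r" using that kn by (simp add: field_simps)
      then show ?thesis by (simp add: dist_norm)
    qed
    have "\<And>s. 0 \<le> s \<Longrightarrow> s \<le> t \<Longrightarrow> ((\<lambda>s. W (y0 + s *\<^sub>R k)) has_real_derivative (G (y0 + s *\<^sub>R k) \<bullet> k)) (at s)"
      using inb grad line_deriv by blast
    from MVT2[OF t0 this] obtain z where z: "z > 0" "z < t"
      "W (y0 + t *\<^sub>R k) - W (y0 + 0 *\<^sub>R k) = (t - 0) * (G (y0 + z *\<^sub>R k) \<bullet> k)" by blast
    have "z < d" using z unfolding t_def by (auto simp: min_def split: if_splits)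
    then have "G (y0 + z *\<^sub>R k) \<bullet> k > 0" using dd z G0 by force
    then have "t * (G (y0 + z *\<^sub>R k) \<bullet> k) > 0" using t0 by simp
    then have "W (y0 + t *\<^sub>R k) > W y0" using z by simp
    moreover have "W (y0 + t *\<^sub>R k) \<le> W y0" using mx inb[of t] t0 by simp
    ultimately show False by simp
  qed
  with G0 show ?thesis by simp
qed

lemma F_deriv:
  fixes Du :: "'a::euclidean_space \<Rightarrow> 'a"
  assumes d: "(Du has_derivative Hz) (at z)" and n: "norm (Du z) < 1"
  shows "((\<lambda>y. Du y /\<^sub>R sqrt (1 - (norm (Du y))\<^sup>2)) has_derivative
     (\<lambda>k. Hz k /\<^sub>R sqrt (1 - (norm (Du z))\<^sup>2)
        + ((Du z \<bullet> Hz k) / (sqrt (1 - (norm (Du z))\<^sup>2))^3) *\<^sub>R Du z)) (at z)"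
proof -
  define p where "p = Du z"
  define s where "s = sqrt (1 - p \<bullet> p)"
  have "(norm (Du z))\<^sup>2 < 1" using n by (simp add: abs_square_less_1)
  then have q: "0 < 1 - Du z \<bullet> Du z" by (simp add: power2_norm_eq_inner)
  have s0: "s > 0" using q by (simp add: s_def p_def)
  have h1: "((\<lambda>y. 1 - Du y \<bullet> Du y) has_derivative (\<lambda>k. - (Hz k \<bullet> Du z + Du z \<bullet> Hz k))) (at z)"
    by (auto intro!: derivative_eq_intros d)
  note h2 = has_derivative_real_sqrt[OF q h1]
  have sn: "sqrt (1 - Du z \<bullet> Du z) \<noteq> 0" using q by simp
  note h3 = Deriv.has_derivative_inverse[OF sn h2]
  note h4 = has_derivative_scaleR[OF h3 d]
  have eq1: "(\<lambda>y. Du y /\<^sub>R sqrt (1 - (norm (Du y))\<^sup>2)) = (\<lambda>y. inverse (sqrt (1 - Du y \<bullet> Du y)) *\<^sub>R Du y)"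
    by (auto simp: power2_norm_eq_inner)
  have ss: "sqrt (1 - (norm (Du z))\<^sup>2) = s" by (simp add: s_def p_def power2_norm_eq_inner)
  show ?thesis unfolding eq1 ss
    apply (rule has_derivative_eq_rhs[OF h4])
    apply (rule ext)
    using s0 unfolding s_def p_def
    by (auto simp: inner_commute power3_eq_cube field_simps)
qed

lemma div_formula:
  fixes Du :: "'a::euclidean_space \<Rightarrow> 'a"
  assumes d: "(Du has_derivative Hz) (at z)" and n: "norm (Du z) < 1"
  shows "divergence (\<lambda>y. Du y /\<^sub>R sqrt (1 - (norm (Du y))\<^sup>2)) z
     = (\<Sum>b\<in>Basis. Hz b \<bullet> b) / sqrt (1 - (norm (Du z))\<^sup>2)
       + (Du z \<bullet> Hz (Du z)) / (sqrt (1 - (norm (Du z))\<^sup>2))^3"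
proof -
  define s where "s = sqrt (1 - (norm (Du z))\<^sup>2)"
  have lin: "linear Hz" using d has_derivative_linear by blast
  have comp: "Hz (Du z) \<bullet> Du z = (\<Sum>b\<in>Basis. (Du z \<bullet> b) * (Hz b \<bullet> Du z))"
    using Linear_Algebra.linear_componentwise[OF lin] by blast
  have "divergence (\<lambda>y. Du y /\<^sub>R sqrt (1 - (norm (Du y))\<^sup>2)) z
     = (\<Sum>b\<in>Basis. (Hz b /\<^sub>R s + ((Du z \<bullet> Hz b) / s^3) *\<^sub>R Du z) \<bullet> b)"
    unfolding divergence_def frechet_derivative_at[OF F_deriv[OF d n], symmetric] s_def by simp
  also have "\<dots> = (\<Sum>b\<in>Basis. (Hz b \<bullet> b) / s) + (\<Sum>b\<in>Basis. (Du z \<bullet> b) * (Hz b \<bullet> Du z)) / s^3"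
    unfolding sum_divide_distrib sum.distrib[symmetric]
    by (intro sum.cong refl) (simp add: inner_add_right inner_commute divide_inverse)
  also have "\<dots> = (\<Sum>b\<in>Basis. Hz b \<bullet> b) / s + (Du z \<bullet> Hz (Du z)) / s^3"
    using comp by (simp add: sum_divide_distrib inner_commute)
  finally show ?thesis unfolding s_def .
qed

lemma shift_deriv:
  assumes "(f has_derivative f') (at (y + c))"
  shows "((\<lambda>y. f (y + c)) has_derivative f') (at y)"
proof -
  have l: "((\<lambda>y. y + c) has_derivative (\<lambda>h. h)) (at y)"
    by (auto intro!: derivative_eq_intros)
  show ?thesis using has_derivative_compose[OF l assms] by simp
qed

lemma mvt_line:
  fixes u :: "'a::euclidean_space \<Rightarrow> real"
  assumes grad: "\<forall>x\<in>\<Omega>. (u has_derivative (\<lambda>h. Du x \<bullet> h)) (at x)"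
    and h: "h > 0" and seg: "\<forall>t\<in>{0..h}. y + t *\<^sub>R e \<in> \<Omega>"
  shows "\<exists>t. 0 < t \<and> t < h \<and> u (y + h *\<^sub>R e) - u y = h * (Du (y + t *\<^sub>R e) \<bullet> e)"
proof -
  have "\<And>s. 0 \<le> s \<Longrightarrow> s \<le> h \<Longrightarrow> ((\<lambda>s. u (y + s *\<^sub>R e)) has_real_derivative (Du (y + s *\<^sub>R e) \<bullet> e)) (at s)"
    using seg grad line_deriv by fastforce
  from MVT2[OF h this] obtain z where "z > 0" "z < h"
      "u (y + h *\<^sub>R e) - u (y + 0 *\<^sub>R e) = (h - 0) * (Du (y + z *\<^sub>R e) \<bullet> e)" by blast
  then show ?thesis by auto
qed

lemma interior_case:
  fixes u :: "'a::euclidean_space \<Rightarrow> real" and Du :: "'a \<Rightarrow> 'a"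
  assumes alpha: "\<alpha> < 0"
    and grad: "\<forall>x\<in>\<Omega>. (u has_derivative (\<lambda>h. Du x \<bullet> h)) (at x)"
    and Du_diff: "\<forall>x\<in>\<Omega>. Du differentiable (at x)"
    and u_pos: "\<forall>x\<in>\<Omega>. u x > 0"
    and spacelike: "\<forall>x\<in>\<Omega>. norm (Du x) < 1"
    and eqn: "\<forall>x\<in>\<Omega>. divergence (\<lambda>y. Du y /\<^sub>R sqrt (1 - (norm (Du y))\<^sup>2)) x
                   = \<alpha> / (u x * sqrt (1 - (norm (Du x))\<^sup>2))"
    and r: "r > 0" and ball: "\<forall>y\<in>ball y0 r. y \<in> \<Omega> \<and> y + c \<in> \<Omega>"
    and mx: "\<forall>y\<in>ball y0 r. u (y + c) - u y \<le> u (y0 + c) - u y0"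
    and pos: "u (y0 + c) - u y0 > 0"
  shows False
proof -
  have y0: "y0 \<in> \<Omega>" "y0 + c \<in> \<Omega>" using ball r by auto
  define H1 where "H1 = frechet_derivative Du (at (y0 + c))"
  define H2 where "H2 = frechet_derivative Du (at y0)"
  have dH1: "(Du has_derivative H1) (at (y0 + c))"
    unfolding H1_def using Du_diff y0 frechet_derivative_works by blast
  have dH2: "(Du has_derivative H2) (at y0)"
    unfolding H2_def using Du_diff y0 frechet_derivative_works by blast
  have lin1: "linear H1" using dH1 has_derivative_linear by blast
  have lin2: "linear H2" using dH2 has_derivative_linear by blast
  have gW: "\<forall>y\<in>ball y0 r. ((\<lambda>y. u (y + c) - u y) has_derivative (\<lambda>h. (Du (y + c) - Du y) \<bullet> h)) (at y)"
  proof
    fix y assume "y \<in> ball y0 r"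
    then have "y \<in> \<Omega>" "y + c \<in> \<Omega>" using ball by auto
    then have a: "((\<lambda>y. u (y + c)) has_derivative (\<lambda>h. Du (y + c) \<bullet> h)) (at y)"
      and b: "(u has_derivative (\<lambda>h. Du y \<bullet> h)) (at y)"
      using grad shift_deriv by blast+
    show "((\<lambda>y. u (y + c) - u y) has_derivative (\<lambda>h. (Du (y + c) - Du y) \<bullet> h)) (at y)"
      using has_derivative_diff[OF a b] by (simp add: inner_diff_left)
  qed
  have hG: "((\<lambda>y. Du (y + c) - Du y) has_derivative (\<lambda>k. H1 k - H2 k)) (at y0)"
    using has_derivative_diff[OF shift_deriv[OF dH1] dH2] .
  have L: "(\<lambda>y. Du (y + c) - Du y) y0 = 0 \<and> (\<lambda>k. H1 k - H2 k) k \<bullet> k \<le> 0" for k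
    using local_max_2nd[OF r _ gW hG] mx by blast
  then have peq: "Du (y0 + c) = Du y0" by simp
  have nsd: "(H1 k - H2 k) \<bullet> k \<le> 0" for k using L by simp
  define p where "p = Du y0"
  define s where "s = sqrt (1 - (norm p)\<^sup>2)"
  have "(norm p)\<^sup>2 < 1" using spacelike y0 by (simp add: p_def abs_square_less_1)
  then have s0: "s > 0" by (simp add: s_def)
  have e1: "(\<Sum>b\<in>Basis. H1 b \<bullet> b) / s + (p \<bullet> H1 p) / s^3 = \<alpha> / (u (y0 + c) * s)"
    using div_formula[OF dH1] eqn spacelike y0 peq by (simp add: p_def s_def)
  have e2: "(\<Sum>b\<in>Basis. H2 b \<bullet> b) / s + (p \<bullet> H2 p) / s^3 = \<alpha> / (u y0 * s)"
    using div_formula[OF dH2] eqn spacelike y0 by (simp add: p_def s_def)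
  have t1: "(\<Sum>b\<in>Basis. H1 b \<bullet> b) - (\<Sum>b\<in>Basis. H2 b \<bullet> b) \<le> 0"
    unfolding sum_subtractf[symmetric] using nsd by (intro sum_nonpos) (simp add: inner_diff_left)
  have t2: "p \<bullet> H1 p - p \<bullet> H2 p \<le> 0" using nsd[of p] by (simp add: inner_diff_left inner_diff_right inner_commute)
  have lhs: "((\<Sum>b\<in>Basis. H1 b \<bullet> b) / s + (p \<bullet> H1 p) / s^3) - ((\<Sum>b\<in>Basis. H2 b \<bullet> b) / s + (p \<bullet> H2 p) / s^3) \<le> 0"
  proof -
    have "((\<Sum>b\<in>Basis. H1 b \<bullet> b) / s + (p \<bullet> H1 p) / s^3) - ((\<Sum>b\<in>Basis. H2 b \<bullet> b) / s + (p \<bullet> H2 p) / s^3)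
       = ((\<Sum>b\<in>Basis. H1 b \<bullet> b) - (\<Sum>b\<in>Basis. H2 b \<bullet> b)) / s + (p \<bullet> H1 p - p \<bullet> H2 p) / s^3"
      by (simp add: diff_divide_distrib)
    also have "\<dots> \<le> 0" using t1 t2 s0
      by (intro add_nonpos_nonpos divide_nonpos_pos) auto
    finally show ?thesis .
  qed
  have u0: "u y0 > 0" using u_pos y0 by auto
  have u1: "u (y0 + c) > u y0" using pos by simp
  have "\<alpha> / u (y0 + c) > \<alpha> / u y0"
    using u0 u1 alpha by (simp add: divide_less_eq_1 field_simps mult_less_cancel_left_neg)
  then have "\<alpha> / u (y0 + c) / s > \<alpha> / u y0 / s" by (rule divide_strict_right_mono[OF _ s0])
  then have "\<alpha> / (u (y0 + c) * s) - \<alpha> / (u y0 * s) > 0" by (simp add: divide_divide_eq_left)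
  with lhs e1 e2 show False by linarith
qed

lemma key:
  fixes \<Omega> :: "'a::euclidean_space set" and u :: "'a \<Rightarrow> real" and Du :: "'a \<Rightarrow> 'a"
  assumes opn: "open \<Omega>" and bnd: "bounded \<Omega>"
    and alpha: "\<alpha> < 0"
    and u_cont: "continuous_on (closure \<Omega>) u"
    and grad: "\<forall>x\<in>\<Omega>. (u has_derivative (\<lambda>h. Du x \<bullet> h)) (at x)"
    and Du_cont: "continuous_on (closure \<Omega>) Du"
    and Du_diff: "\<forall>x\<in>\<Omega>. Du differentiable (at x)"
    and u_pos: "\<forall>x\<in>\<Omega>. u x > 0"
    and spacelike: "\<forall>x\<in>closure \<Omega>. norm (Du x) < 1"
    and eqn: "\<forall>x\<in>\<Omega>. divergence (\<lambda>y. Du y /\<^sub>R sqrt (1 - (norm (Du y))\<^sup>2)) x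
                   = \<alpha> / (u x * sqrt (1 - (norm (Du x))\<^sup>2))"
    and bdd: "bdd_above ((\<lambda>x. norm (Du x)) ` frontier \<Omega>)"
    and x0: "x0 \<in> \<Omega>" and fne: "frontier \<Omega> \<noteq> {}"
  shows "norm (Du x0) \<le> (SUP x\<in>frontier \<Omega>. norm (Du x))"
proof (rule ccontr)
  define S where "S = (SUP x\<in>frontier \<Omega>. norm (Du x))"
  assume "\<not> norm (Du x0) \<le> (SUP x\<in>frontier \<Omega>. norm (Du x))"
  then have mS: "norm (Du x0) > S" unfolding S_def by simp
  have Sup: "norm (Du z) \<le> S" if "z \<in> frontier \<Omega>" for z
    unfolding S_def using bdd that by (rule cSUP_upper2) simp
  define m where "m = norm (Du x0)"
  define \<epsilon> where "\<epsilon> = (m - S) / 2"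
  have eps: "\<epsilon> > 0" using mS by (simp add: \<epsilon>_def m_def)
  obtain z0 where "z0 \<in> frontier \<Omega>" using fne by blast
  then have "0 \<le> S" using Sup[of z0] norm_ge_zero[of "Du z0"] by linarith
  then have m0: "m > 0" using mS unfolding m_def by linarith
  define e where "e = Du x0 /\<^sub>R m"
  have ne: "norm e = 1" using m0 by (simp add: e_def m_def)
  have De: "Du x0 \<bullet> e = m" using m0 by (simp add: e_def m_def power2_norm_eq_inner[symmetric] power2_eq_square)
  have cs: "v \<bullet> e \<le> norm v" for v
    using norm_cauchy_schwarz[of v e] ne by simp
  have cpt: "compact (closure \<Omega>)" using bnd by (simp add: compact_closure)
  have "uniformly_continuous_on (closure \<Omega>) Du" using compact_uniformly_continuous[OF Du_cont cpt] .
  then obtain \<delta> where d0: "\<delta> > 0"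
     and ucont: "\<And>y z. y \<in> closure \<Omega> \<Longrightarrow> z \<in> closure \<Omega> \<Longrightarrow> dist z y < \<delta> \<Longrightarrow> dist (Du z) (Du y) < \<epsilon>"
    unfolding uniformly_continuous_on_def using eps by metis
  obtain \<rho> where r0: "\<rho> > 0" and rb: "ball x0 \<rho> \<subseteq> \<Omega>" using opn x0 open_contains_ball by blast
  define h where "h = min (\<delta>/2) (\<rho>/2)"
  have h0: "h > 0" and hd: "h \<le> \<delta>/2" and hr: "h < \<rho>" using d0 r0 by (auto simp: h_def)
  define D where "D = {y. \<forall>t\<in>{0..h}. y + t *\<^sub>R e \<in> \<Omega>}"
  define W where "W = (\<lambda>y. u (y + h *\<^sub>R e) - u y)"
  have mvt: "\<exists>t. 0 < t \<and> t < h \<and> W y = h * (Du (y + t *\<^sub>R e) \<bullet> e)" if "y \<in> D" for y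
    using mvt_line[OF grad h0, of y e] that by (simp add: D_def W_def)
  have DO: "y \<in> \<Omega>" "y + h *\<^sub>R e \<in> \<Omega>" if "y \<in> D" for y
    using that h0 unfolding D_def by (auto dest: bspec[of _ _ 0] bspec[of _ _ h])
  have x0D: "x0 \<in> D" unfolding D_def
  proof (intro CollectI ballI)
    fix t assume "t \<in> {0..h}"
    then have "norm (t *\<^sub>R e) < \<rho>" using ne hr by auto
    then show "x0 + t *\<^sub>R e \<in> \<Omega>" using rb by (auto simp: dist_norm)
  qed
  have Wx0: "W x0 > h * (S + \<epsilon>)"
  proof -
    obtain t where t: "0 < t" "t < h" "W x0 = h * (Du (x0 + t *\<^sub>R e) \<bullet> e)" using mvt[OF x0D] by blast
    have "x0 + t *\<^sub>R e \<in> \<Omega>" using x0D t unfolding D_def by auto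
    moreover have "dist (x0 + t *\<^sub>R e) x0 < \<delta>" using t ne hd d0 by (simp add: dist_norm)
    ultimately have "dist (Du (x0 + t *\<^sub>R e)) (Du x0) < \<epsilon>"
      using ucont x0 closure_subset by blast
    then have "norm (Du (x0 + t *\<^sub>R e) - Du x0) < \<epsilon>" by (simp add: dist_norm)
    moreover have "Du (x0 + t *\<^sub>R e) \<bullet> e = m + (Du (x0 + t *\<^sub>R e) - Du x0) \<bullet> e"
      using De by (simp add: inner_diff_left)
    moreover have "- ((Du (x0 + t *\<^sub>R e) - Du x0) \<bullet> e) \<le> norm (Du (x0 + t *\<^sub>R e) - Du x0)"
      using cs[of "Du x0 - Du (x0 + t *\<^sub>R e)"] by (simp add: inner_diff_left norm_minus_commute)
    ultimately have "Du (x0 + t *\<^sub>R e) \<bullet> e > S + \<epsilon>" unfolding \<epsilon>_def by (smt (verit) field_sum_of_halves)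
    then show ?thesis using t h0 by simp
  qed
  have Dopen: "\<exists>r>0. ball y r \<subseteq> D" if "y \<in> D" for y
  proof -
    let ?K = "(\<lambda>t. y + t *\<^sub>R e) ` {0..h}"
    have "compact ?K" by (intro compact_continuous_image continuous_intros compact_Icc)
    moreover have "?K \<subseteq> \<Union>{\<Omega>}" using that unfolding D_def by auto
    ultimately obtain r where r: "r > 0" "\<And>x. x \<in> ?K \<Longrightarrow> \<exists>G\<in>{\<Omega>}. ball x r \<subseteq> G"
      using Heine_Borel_lemma[of ?K "{\<Omega>}"] opn by blast
    have "ball y r \<subseteq> D"
    proof
      fix y' assume y': "y' \<in> ball y r"
      show "y' \<in> D" unfolding D_def
      proof (intro CollectI ballI)
        fix t assume t: "t \<in> {0..h}"
        then have "y + t *\<^sub>R e \<in> ?K" by blast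
        then have "ball (y + t *\<^sub>R e) r \<subseteq> \<Omega>" using r(2)[of "y + t *\<^sub>R e"] by blast
        moreover have "y' + t *\<^sub>R e \<in> ball (y + t *\<^sub>R e) r" using y' by (simp add: dist_norm)
        ultimately show "y' + t *\<^sub>R e \<in> \<Omega>" by blast
      qed
    qed
    with r show ?thesis by blast
  qed
  have DcO: "y + t *\<^sub>R e \<in> closure \<Omega>" if "y \<in> closure D" "t \<in> {0..h}" for y t
  proof -
    have "(+) (t *\<^sub>R e) ` D \<subseteq> \<Omega>" using that(2) unfolding D_def by (auto simp: add.commute)
    then have "closure ((+) (t *\<^sub>R e) ` D) \<subseteq> closure \<Omega>" by (rule closure_mono)
    moreover have "t *\<^sub>R e + y \<in> (+) (t *\<^sub>R e) ` closure D" using that(1) by blast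
    ultimately have "t *\<^sub>R e + y \<in> closure \<Omega>" unfolding closure_translation by blast
    then show ?thesis by (simp add: add.commute)
  qed
  have DsubO: "D \<subseteq> \<Omega>" using DO by blast
  have "bounded D" by (rule bounded_subset[OF bnd DsubO])
  then have cD: "compact (closure D)" by (simp add: compact_closure)
  have Wc: "continuous_on (closure D) W"
  proof -
    have a: "continuous_on (closure D) (\<lambda>y. u (y + h *\<^sub>R e))"
    proof (rule continuous_on_compose2[OF u_cont])
      show "continuous_on (closure D) (\<lambda>y. y + h *\<^sub>R e)" by (intro continuous_intros)
      show "(\<lambda>y. y + h *\<^sub>R e) ` closure D \<subseteq> closure \<Omega>" using DcO h0 by auto
    qed
    have b: "continuous_on (closure D) u"
      by (rule continuous_on_subset[OF u_cont]) (simp add: DsubO closure_mono)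
    show ?thesis unfolding W_def using a b by (intro continuous_intros)
  qed
  obtain y0 where y0: "y0 \<in> closure D" and y0max: "\<forall>y\<in>closure D. W y \<le> W y0"
    using continuous_attains_sup[OF cD _ Wc] x0D closure_subset by blast
  have Wy0: "W y0 > h * (S + \<epsilon>)" using y0max x0D closure_subset Wx0 by force
  show False
  proof (cases "y0 \<in> D")
    case True
    obtain r where r: "r > 0" "ball y0 r \<subseteq> D" using Dopen[OF True] by blast
    show False
    proof (rule interior_case[OF alpha grad Du_diff u_pos _ eqn r(1)])
      show "\<forall>x\<in>\<Omega>. norm (Du x) < 1" using spacelike closure_subset by blast
      show "\<forall>y\<in>ball y0 r. y \<in> \<Omega> \<and> y + h *\<^sub>R e \<in> \<Omega>" using r DO by blast
      show "\<forall>y\<in>ball y0 r. u (y + h *\<^sub>R e) - u y \<le> u (y0 + h *\<^sub>R e) - u y0"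
        using r y0max closure_subset unfolding W_def by blast
      have "h * (S + \<epsilon>) \<ge> 0" using h0 eps \<open>0 \<le> S\<close> by simp
      then show "u (y0 + h *\<^sub>R e) - u y0 > 0" using Wy0 unfolding W_def by linarith
    qed
  next
    case False
    then obtain t where t: "t \<in> {0..h}" "y0 + t *\<^sub>R e \<notin> \<Omega>" unfolding D_def by blast
    define z where "z = y0 + t *\<^sub>R e"
    have zc: "z \<in> closure \<Omega>" using DcO[OF y0 t(1)] by (simp add: z_def)
    have zf: "z \<in> frontier \<Omega>" using zc t(2) opn by (simp add: frontier_def interior_open z_def)
    have gap: "W y0 - h * (S + \<epsilon>) > 0" using Wy0 by simp
    obtain d where d: "d > 0" "\<forall>y\<in>closure D. dist y y0 < d \<longrightarrow> dist (W y) (W y0) < W y0 - h * (S + \<epsilon>)"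
      using continuous_on_iff[THEN iffD1, OF Wc, rule_format, OF y0 gap] by blast
    have md: "min d (\<delta>/2) > 0" using d(1) d0 by simp
    obtain y where y: "y \<in> D" "dist y y0 < min d (\<delta>/2)"
      using y0[unfolded closure_approachable, rule_format, OF md] by blast
    have "dist (W y) (W y0) < W y0 - h * (S + \<epsilon>)" using d y closure_subset by auto
    then have Wy: "W y > h * (S + \<epsilon>)" by (simp add: dist_real_def abs_if split: if_splits)
    obtain t' where t': "0 < t'" "t' < h" "W y = h * (Du (y + t' *\<^sub>R e) \<bullet> e)" using mvt[OF y(1)] by blast
    have xi: "y + t' *\<^sub>R e \<in> \<Omega>" using y(1) t' unfolding D_def by auto
    have "dist (y + t' *\<^sub>R e) z \<le> dist y y0 + \<bar>t' - t\<bar>"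
    proof -
      have "y + t' *\<^sub>R e - z = (y - y0) + (t' - t) *\<^sub>R e" by (simp add: z_def algebra_simps)
      then have "dist (y + t' *\<^sub>R e) z = norm ((y - y0) + (t' - t) *\<^sub>R e)" unfolding dist_norm by metis
      also have "\<dots> \<le> norm (y - y0) + norm ((t' - t) *\<^sub>R e)" by (rule norm_triangle_ineq)
      finally show ?thesis using ne by (simp add: dist_norm)
    qed
    also have "\<dots> < \<delta>" using y t t' hd by auto
    finally have "dist (Du (y + t' *\<^sub>R e)) (Du z) < \<epsilon>"
      using ucont[of z "y + t' *\<^sub>R e"] zc xi closure_subset by blast
    moreover have "norm (Du (y + t' *\<^sub>R e)) - norm (Du z) \<le> norm (Du (y + t' *\<^sub>R e) - Du z)"
      by (rule norm_triangle_ineq2)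
    ultimately have "norm (Du (y + t' *\<^sub>R e)) < norm (Du z) + \<epsilon>"
      by (simp add: dist_norm)
    then have "Du (y + t' *\<^sub>R e) \<bullet> e < S + \<epsilon>" using cs[of "Du (y + t' *\<^sub>R e)"] Sup[OF zf] by linarith
    then have "W y < h * (S + \<epsilon>)" using t'(3) h0 by simp
    with Wy show False by simp
  qed
qed

theorem proposition4p7:
  fixes \<Omega> :: "'a::euclidean_space set"
    and u \<phi> :: "'a \<Rightarrow> real"
    and Du :: "'a \<Rightarrow> 'a"
    and \<alpha> :: real
  assumes domain: "open \<Omega>" "connected \<Omega>" "bounded \<Omega>" "\<Omega> \<noteq> {}"
    and alpha: "\<alpha> < 0"
    \<comment> \<open>u \<in> C^1(closure \<Omega>): u continuous on the closure, with gradient Du in \<Omega>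
        extending continuously to the closure\<close>
    and u_cont: "continuous_on (closure \<Omega>) u"
    and grad: "\<forall>x\<in>\<Omega>. (u has_derivative (\<lambda>h. Du x \<bullet> h)) (at x)"
    and Du_cont: "continuous_on (closure \<Omega>) Du"
    \<comment> \<open>u \<in> C^2(\<Omega>): Du differentiable in \<Omega> with continuous second partials\<close>
    and Du_diff: "\<forall>x\<in>\<Omega>. Du differentiable (at x)"
    and D2_cont: "\<forall>b\<in>Basis. continuous_on \<Omega> (\<lambda>x. frechet_derivative Du (at x) b)"
    \<comment> \<open>positive solution\<close>
    and u_pos: "\<forall>x\<in>\<Omega>. u x > 0"
    and spacelike: "\<forall>x\<in>closure \<Omega>. norm (Du x) < 1"
    and eqn: "\<forall>x\<in>\<Omega>. divergence (\<lambda>y. Du y /\<^sub>R sqrt (1 - (norm (Du y))\<^sup>2)) x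
                   = \<alpha> / (u x * sqrt (1 - (norm (Du x))\<^sup>2))"
    and phi_pos: "\<forall>x\<in>frontier \<Omega>. \<phi> x > 0"
    and boundary: "\<forall>x\<in>frontier \<Omega>. u x = \<phi> x"
  shows "(SUP x\<in>closure \<Omega>. norm (Du x)) = (SUP x\<in>frontier \<Omega>. norm (Du x))"
proof -
  have fsc: "frontier \<Omega> \<subseteq> closure \<Omega>" by (auto simp: frontier_def)
  have ne: "\<Omega> \<noteq> UNIV" using domain(3) not_bounded_UNIV by blast
  have fne: "frontier \<Omega> \<noteq> {}" using frontier_not_empty[OF domain(4) ne] .
  have bdd: "bdd_above ((\<lambda>x. norm (Du x)) ` frontier \<Omega>)"
    using spacelike fsc by (intro bdd_aboveI[of _ 1]) (auto intro: less_imp_le)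
  have bddc: "bdd_above ((\<lambda>x. norm (Du x)) ` closure \<Omega>)"
    using spacelike by (intro bdd_aboveI[of _ 1]) (auto intro: less_imp_le)
  have K: "norm (Du x) \<le> (SUP x\<in>frontier \<Omega>. norm (Du x))" if "x \<in> \<Omega>" for x
    by (rule key[OF domain(1) domain(3) alpha u_cont grad Du_cont Du_diff u_pos spacelike eqn bdd that fne])
  have cl: "closure \<Omega> = \<Omega> \<union> frontier \<Omega>"
    using domain(1) closure_subset by (auto simp: frontier_def interior_open)
  show ?thesis
  proof (rule antisym)
    show "(SUP x\<in>closure \<Omega>. norm (Du x)) \<le> (SUP x\<in>frontier \<Omega>. norm (Du x))"
    proof (rule cSUP_least)
      show "closure \<Omega> \<noteq> {}" using domain(4) closure_subset by blast
      fix x assume "x \<in> closure \<Omega>"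
      then have "x \<in> \<Omega> \<or> x \<in> frontier \<Omega>" using cl by blast
      then show "norm (Du x) \<le> (SUP x\<in>frontier \<Omega>. norm (Du x))"
      proof
        assume "x \<in> frontier \<Omega>"
        then show ?thesis using cSUP_upper[OF _ bdd] by blast
      qed (rule K)
    qed
    show "(SUP x\<in>frontier \<Omega>. norm (Du x)) \<le> (SUP x\<in>closure \<Omega>. norm (Du x))"
      by (rule cSUP_subset_mono[OF fne bddc fsc]) simp
  qed
qed

end
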